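(* Let $k\ge0$ and let $A$ be a real symmetric positive semidefinite matrix indexed by $\mathcal{F}'_k$ such that $A_{F_1,G_1}=A_{F_2,G_2}$ whenever $F_1G_1\simeq F_2G_2$. Then every entry of $A$ lies in the interval $[0,A_{U_k,U_k}]$, where $U_k$ is the edgeless graph on $[k]$.
   Context: $\mathcal{F}'_k$ denotes the set of flat $k$-labeled graphs, i.e. graphs on node set $[k]$ with all nodes labeled $1,\dots,k$. For $F,G\in\mathcal{F}'_k$, $FG$ is the graph on $[k]$ with edge set $E(F)\cup E(G)$. For graphs $F,G$, $F\simeq G$ means they become isomorphic after deleting their isolated nodes. *)

theory Defs
  imports Complex_Main
begin

text \<open>A simple graph on node set [k] = {1..k} is represented by its edge set:
  a set of 2-element subsets of {1..k}.  All nodes 1..k are present (labeled),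
  so the node set is implicit.\<close>

definition flat_graphs :: "nat \<Rightarrow> nat set set set" where
  "flat_graphs k = {E. E \<subseteq> {{i, j} | i j. i \<in> {1..k} \<and> j \<in> {1..k} \<and> i \<noteq> j}}"

definition glue :: "nat set set \<Rightarrow> nat set set \<Rightarrow> nat set set" where
  "glue F G = F \<union> G"

text \<open>F \<simeq> G: isomorphic after deleting isolated nodes.  The non-isolated nodes
  of a graph with edge set E are exactly \<Union>E.\<close>
definition iso_noniso :: "nat set set \<Rightarrow> nat set set \<Rightarrow> bool" where
  "iso_noniso F G \<longleftrightarrow> (\<exists>f. bij_betw f (\<Union>F) (\<Union>G) \<and> (\<lambda>e. f ` e) ` F = G)"

definition edgeless :: "nat \<Rightarrow> nat set set" where
  "edgeless k = {}"

definition psd_on :: "'a set \<Rightarrow> ('a \<Rightarrow> 'a \<Rightarrow> real) \<Rightarrow> bool" where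
  "psd_on I A \<longleftrightarrow> (\<forall>F\<in>I. \<forall>G\<in>I. A F G = A G F) \<and>
     (\<forall>x :: 'a \<Rightarrow> real. (\<Sum>F\<in>I. \<Sum>G\<in>I. x F * A F G * x G) \<ge> 0)"

end

theory Submission
  imports Defs
begin

lemma iso_refl: "iso_noniso X X"
  unfolding iso_noniso_def by (rule exI[of _ id]) auto

lemma fg_finite: "finite (flat_graphs k)"
proof -
  have "{{i, j} | i j. i \<in> {1..k} \<and> j \<in> {1..k} \<and> i \<noteq> j} \<subseteq> (\<lambda>(i,j). {i,j}) ` ({1..k} \<times> {1..k})" by auto
  hence "finite {{i, j} | i j. i \<in> {1..k} \<and> j \<in> {1..k} \<and> i \<noteq> j}"
    by (rule finite_subset) simp
  thus ?thesis unfolding flat_graphs_def by simp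
qed

lemma fg_union: "F \<in> flat_graphs k \<Longrightarrow> G \<in> flat_graphs k \<Longrightarrow> F \<union> G \<in> flat_graphs k"
  unfolding flat_graphs_def by auto

lemma fg_empty: "{} \<in> flat_graphs k"
  unfolding flat_graphs_def by auto

lemma restrict_sum:
  fixes x :: "'a \<Rightarrow> real"
  assumes "finite I" "S \<subseteq> I" "\<And>F. F \<notin> S \<Longrightarrow> x F = 0"
  shows "(\<Sum>F\<in>I. \<Sum>G\<in>I. x F * A F G * x G) = (\<Sum>F\<in>S. \<Sum>G\<in>S. x F * A F G * x G)"
proof -
  have "(\<Sum>F\<in>I. \<Sum>G\<in>I. x F * A F G * x G) = (\<Sum>F\<in>I. \<Sum>G\<in>S. x F * A F G * x G)"
    by (rule sum.cong[OF refl], rule sum.mono_neutral_right) (use assms in auto)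
  also have "\<dots> = (\<Sum>F\<in>S. \<Sum>G\<in>S. x F * A F G * x G)"
    by (rule sum.mono_neutral_right) (use assms in auto)
  finally show ?thesis .
qed

theorem mainTheorem8:
  fixes k :: nat and A :: "nat set set \<Rightarrow> nat set set \<Rightarrow> real"
  assumes psd: "psd_on (flat_graphs k) A"
    and inv: "\<And>F1 G1 F2 G2. F1 \<in> flat_graphs k \<Longrightarrow> G1 \<in> flat_graphs k \<Longrightarrow>
               F2 \<in> flat_graphs k \<Longrightarrow> G2 \<in> flat_graphs k \<Longrightarrow>
               iso_noniso (glue F1 G1) (glue F2 G2) \<Longrightarrow> A F1 G1 = A F2 G2"
  shows "\<forall>F\<in>flat_graphs k. \<forall>G\<in>flat_graphs k.
           0 \<le> A F G \<and> A F G \<le> A (edgeless k) (edgeless k)"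
proof (intro ballI)
  fix F G assume F: "F \<in> flat_graphs k" and G: "G \<in> flat_graphs k"
  define H where "H = F \<union> G"
  have H: "H \<in> flat_graphs k" using F G fg_union H_def by blast
  have e: "{} \<in> flat_graphs k" by (rule fg_empty)
  have q: "\<forall>x :: nat set set \<Rightarrow> real. (\<Sum>F\<in>flat_graphs k. \<Sum>G\<in>flat_graphs k. x F * A F G * x G) \<ge> 0"
    using psd unfolding psd_on_def by blast
  have a1: "A F G = A H H"
    by (rule inv[OF F G H H]) (simp add: glue_def H_def iso_refl)
  have a2: "A F G = A H {}"
    by (rule inv[OF F G H e]) (simp add: glue_def H_def iso_refl)
  have d: "A H H \<ge> 0"
  proof -
    define x :: "nat set set \<Rightarrow> real" where "x = (\<lambda>X. if X = H then 1 else 0)"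
    have "(\<Sum>F\<in>flat_graphs k. \<Sum>G\<in>flat_graphs k. x F * A F G * x G) = (\<Sum>F\<in>{H}. \<Sum>G\<in>{H}. x F * A F G * x G)"
      by (rule restrict_sum) (use fg_finite H in \<open>auto simp: x_def\<close>)
    also have "\<dots> = A H H" by (simp add: x_def)
    finally have eq: "(\<Sum>F\<in>flat_graphs k. \<Sum>G\<in>flat_graphs k. x F * A F G * x G) = A H H" .
    show ?thesis using q[rule_format, of x] eq by linarith
  qed
  have u: "A H H \<le> A {} {}"
  proof (cases "H = {}")
    case True thus ?thesis by simp
  next
    case False
    define x :: "nat set set \<Rightarrow> real" where "x = (\<lambda>X. if X = H then 1 else if X = {} then -1 else 0)"
    have "(\<Sum>F\<in>flat_graphs k. \<Sum>G\<in>flat_graphs k. x F * A F G * x G) = (\<Sum>F\<in>{H,{}}. \<Sum>G\<in>{H,{}}. x F * A F G * x G)"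
      by (rule restrict_sum) (use fg_finite H e in \<open>auto simp: x_def\<close>)
    also have "\<dots> = A H H - A H {} - A {} H + A {} {}" using False by (simp add: x_def)
    finally have eq: "(\<Sum>F\<in>flat_graphs k. \<Sum>G\<in>flat_graphs k. x F * A F G * x G) = A H H - A H {} - A {} H + A {} {}" .
    have "0 \<le> A H H - A H {} - A {} H + A {} {}" using q[rule_format, of x] eq by linarith
    moreover have "A {} H = A H {}" using psd H e unfolding psd_on_def by blast
    ultimately show ?thesis using a1 a2 by linarith
  qed
  show "0 \<le> A F G \<and> A F G \<le> A (edgeless k) (edgeless k)"
    using a1 d u by (simp add: edgeless_def)
qed

end
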